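(* Let $X$ be a quasi-lattice and $x,y,z\in X$. Then: (1) $x\tilde\vee x=x\tilde\wedge x=x$. (2) For $\alpha\ge0$, $(\alpha x)\tilde\vee(\alpha y)=\alpha(x\tilde\vee y)$ and $(\alpha x)\tilde\wedge(\alpha y)=\alpha(x\tilde\wedge y)$. (3) For $\alpha\le 0$, $(\alpha x)\tilde\vee(\alpha y)=\alpha(x\tilde\wedge y)$ and $(\alpha x)\tilde\wedge(\alpha y)=\alpha(x\tilde\vee y)$. (4) $(x\tilde\vee y)+z=(x+z)\tilde\vee(y+z)$ and $(x\tilde\wedge y)+z=(x+z)\tilde\wedge(y+z)$. (5) $x^{\pm}\ge0$ and $x^-=(-x)^+$. (6) $\lceil x\rceil\ge0$ and $\lceil\alpha x\rceil=|\alpha|\lceil x\rceil$ for all $\alpha\in\mathbb R$; in particular $\lceil -x\rceil=\lceil x\rceil$. (7) $x=x^+-x^-$, $x^+\tilde\wedge x^-=0$ and $\lceil x\rceil=x^++x^-$. (8) If $x\ge0$, then $x\tilde\wedge 0=0$ and $x=x^+=\lceil x\rceil$. (9) $\lceil\lceil x\rceil\rceil=\lceil x\rceil$. (10) $x\tilde\vee y+x\tilde\wedge y=x+y$ and $x\tilde\vee y-x\tilde\wedge y=\lceil x-y\rceil$. (11) $x\tilde\vee y=\frac12(x+y)+\frac12\lceil x-y\rceil$ and $x\tilde\wedge y=\frac12(x+y)-\frac12\lceil x-y\rceil$.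
   Context: A pre-ordered Banach space is a real Banach space $X$ with a cone $X_+$ ($X_++X_+\subseteq X_+$, $\lambda X_+\subseteq X_+$ for $\lambda\ge0$); $x\le y$ means $y-x\in X_+$. For $A\subseteq X$, $\upsilon(A)$ is the set of upper bounds of $A$ and $\mu(A)$ the set of minimal upper bounds ($z\in\upsilon(A)$ with: $A\le w\le z$ implies $w=z$). Let $\sigma_{x,y}(z)=\|z-x\|+\|z-y\|$. A pre-ordered Banach space with closed cone is a $\upsilon$-quasi-lattice (resp. $\mu$-quasi-lattice) if for all $x,y$ the set $\upsilon(\{x,y\})$ (resp. $\mu(\{x,y\})$) is non-empty and contains a unique minimizer of $\sigma_{x,y}$ over that set, called the quasi-supremum $x\tilde\vee y$. A quasi-lattice is either a $\upsilon$- or a $\mu$-quasi-lattice, with $x\tilde\vee y$ the corresponding quasi-supremum. Define $x\tilde\wedge y:=-((-x)\tilde\vee(-y))$, $\lceil x\rceil:=(-x)\tilde\vee x$, $x^+:=0\tilde\vee x$, $x^-:=0\tilde\vee(-x)$. *)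

theory Defs
  imports "HOL-Analysis.Analysis"
begin

text \<open>A pre-ordered Banach space is a real Banach space (type class banach) together
with a cone C (closed under addition and non-negative scaling); x \<le> y iff y - x \<in> C.\<close>

definition pcone :: "'a::real_vector set \<Rightarrow> bool" where
  "pcone C \<longleftrightarrow> (\<forall>x\<in>C. \<forall>y\<in>C. x + y \<in> C) \<and> (\<forall>x\<in>C. \<forall>l::real. l \<ge> 0 \<longrightarrow> l *\<^sub>R x \<in> C)"

definition cle :: "'a::real_vector set \<Rightarrow> 'a \<Rightarrow> 'a \<Rightarrow> bool" where
  "cle C x y \<longleftrightarrow> y - x \<in> C"

definition ubs :: "'a::real_vector set \<Rightarrow> 'a set \<Rightarrow> 'a set" where
  "ubs C A = {z. \<forall>a\<in>A. cle C a z}"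

definition mubs :: "'a::real_vector set \<Rightarrow> 'a set \<Rightarrow> 'a set" where
  "mubs C A = {z \<in> ubs C A. \<forall>w. (\<forall>a\<in>A. cle C a w) \<and> cle C w z \<longrightarrow> w = z}"

definition sigma :: "'a::real_normed_vector \<Rightarrow> 'a \<Rightarrow> 'a \<Rightarrow> real" where
  "sigma x y z = norm (z - x) + norm (z - y)"

text \<open>The bound set used: mu = False gives upsilon-quasi-lattices, mu = True gives mu-quasi-lattices.\<close>
definition bset :: "'a::real_vector set \<Rightarrow> bool \<Rightarrow> 'a set \<Rightarrow> 'a set" where
  "bset C mu A = (if mu then mubs C A else ubs C A)"

definition is_qsup :: "'a::real_normed_vector set \<Rightarrow> bool \<Rightarrow> 'a \<Rightarrow> 'a \<Rightarrow> 'a \<Rightarrow> bool" where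
  "is_qsup C mu x y z \<longleftrightarrow> z \<in> bset C mu {x, y} \<and> (\<forall>w\<in>bset C mu {x, y}. sigma x y z \<le> sigma x y w)"

definition quasi_lattice :: "'a::banach set \<Rightarrow> bool \<Rightarrow> bool" where
  "quasi_lattice C mu \<longleftrightarrow> pcone C \<and> closed C \<and>
     (\<forall>x y. bset C mu {x, y} \<noteq> {} \<and> (\<exists>!z. is_qsup C mu x y z))"

definition qsup :: "'a::real_normed_vector set \<Rightarrow> bool \<Rightarrow> 'a \<Rightarrow> 'a \<Rightarrow> 'a" where
  "qsup C mu x y = (THE z. is_qsup C mu x y z)"

definition qinf :: "'a::real_normed_vector set \<Rightarrow> bool \<Rightarrow> 'a \<Rightarrow> 'a \<Rightarrow> 'a" where
  "qinf C mu x y = - qsup C mu (- x) (- y)"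

definition qabs :: "'a::real_normed_vector set \<Rightarrow> bool \<Rightarrow> 'a \<Rightarrow> 'a" where
  "qabs C mu x = qsup C mu (- x) x"

definition qpos :: "'a::real_normed_vector set \<Rightarrow> bool \<Rightarrow> 'a \<Rightarrow> 'a" where
  "qpos C mu x = qsup C mu 0 x"

definition qneg :: "'a::real_normed_vector set \<Rightarrow> bool \<Rightarrow> 'a \<Rightarrow> 'a" where
  "qneg C mu x = qsup C mu 0 (- x)"

end

theory Submission
  imports Defs
begin

lemma ql_pcone: "quasi_lattice C mu \<Longrightarrow> pcone C"
  by (simp add: quasi_lattice_def)

lemma ql_qsup: "quasi_lattice C mu \<Longrightarrow> is_qsup C mu x y (qsup C mu x y)"
  unfolding quasi_lattice_def qsup_def by (metis theI')

lemma ql_uniq: "quasi_lattice C mu \<Longrightarrow> is_qsup C mu x y z \<Longrightarrow> qsup C mu x y = z"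
  unfolding quasi_lattice_def qsup_def by (metis the1_equality)

lemma cone_add: "pcone C \<Longrightarrow> a \<in> C \<Longrightarrow> b \<in> C \<Longrightarrow> a + b \<in> C"
  by (simp add: pcone_def)

lemma cone_scale: "pcone C \<Longrightarrow> a \<in> C \<Longrightarrow> (l::real) \<ge> 0 \<Longrightarrow> l *\<^sub>R a \<in> C"
  by (simp add: pcone_def)

lemma mubs_sub: "mubs C A \<subseteq> ubs C A" by (auto simp: mubs_def)

lemma cone0: assumes "quasi_lattice C mu" shows "0 \<in> C"
proof -
  from assms have "bset C mu {0, 0} \<noteq> {}" unfolding quasi_lattice_def by blast
  then obtain z where "z \<in> ubs C {0}" using mubs_sub by (auto simp: bset_def split: if_splits)
  then have "z \<in> C" by (simp add: ubs_def cle_def)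
  then show ?thesis using cone_scale[OF ql_pcone[OF assms], of z 0] by simp
qed

lemma pointed: assumes "quasi_lattice C True" "c \<in> C" "- c \<in> C" shows "c = 0"
proof -
  have P: "pcone C" using assms ql_pcone by blast
  from assms have "bset C True {0, 0} \<noteq> {}" unfolding quasi_lattice_def by blast
  then obtain z where z: "z \<in> mubs C {0}" by (auto simp: bset_def)
  then have zC: "z \<in> C" by (simp add: mubs_def ubs_def cle_def)
  have "z - c \<in> C" using cone_add[OF P zC assms(3)] by simp
  then have "z - c = z" using z assms(2) by (auto simp: mubs_def cle_def)
  then show ?thesis by simp
qed

lemma affine_cle: assumes "pcone C" "(a::real) > 0"
  shows "cle C (a *\<^sub>R u + t) (a *\<^sub>R v + t) \<longleftrightarrow> cle C u v"
proof -
  have e: "(a *\<^sub>R v + t) - (a *\<^sub>R u + t) = a *\<^sub>R (v - u)" by (simp add: algebra_simps)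
  show ?thesis
  proof
    assume "cle C (a *\<^sub>R u + t) (a *\<^sub>R v + t)"
    then have "a *\<^sub>R (v - u) \<in> C" using e by (simp add: cle_def)
    from cone_scale[OF assms(1) this, of "1/a"] assms(2) show "cle C u v" by (simp add: cle_def)
  next
    assume "cle C u v"
    then show "cle C (a *\<^sub>R u + t) (a *\<^sub>R v + t)" using e cone_scale[OF assms(1), of "v - u" a] assms(2)
      by (simp add: cle_def)
  qed
qed

lemma ubs_aff: assumes "pcone C" "(a::real) > 0"
  shows "a *\<^sub>R z + t \<in> ubs C {a *\<^sub>R x + t, a *\<^sub>R y + t} \<longleftrightarrow> z \<in> ubs C {x, y}"
  using affine_cle[OF assms] by (simp add: ubs_def)

lemma inv_aff: fixes w :: "'a::real_vector" assumes "(a::real) > 0" shows "w = a *\<^sub>R ((1/a) *\<^sub>R (w - t)) + t"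
proof -
  have "a * (1/a) = 1" using assms by simp
  then have "a *\<^sub>R ((1/a) *\<^sub>R (w - t)) = w - t" by (simp only: scaleR_scaleR scaleR_one)
  then show ?thesis by simp
qed

lemma mubs_aff: assumes P: "pcone C" and a: "(a::real) > 0"
  shows "a *\<^sub>R z + t \<in> mubs C {a *\<^sub>R x + t, a *\<^sub>R y + t} \<longleftrightarrow> z \<in> mubs C {x, y}"
proof
  assume h: "a *\<^sub>R z + t \<in> mubs C {a *\<^sub>R x + t, a *\<^sub>R y + t}"
  then have zu: "z \<in> ubs C {x, y}" using ubs_aff[OF assms] by (simp add: mubs_def)
  show "z \<in> mubs C {x, y}" unfolding mubs_def
  proof (intro CollectI conjI allI impI zu)
    fix w assume "(\<forall>b\<in>{x, y}. cle C b w) \<and> cle C w z"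
    then have "(\<forall>b\<in>{a *\<^sub>R x + t, a *\<^sub>R y + t}. cle C b (a *\<^sub>R w + t)) \<and> cle C (a *\<^sub>R w + t) (a *\<^sub>R z + t)"
      using affine_cle[OF assms] by simp
    moreover have "\<forall>w. (\<forall>b\<in>{a *\<^sub>R x + t, a *\<^sub>R y + t}. cle C b w) \<and> cle C w (a *\<^sub>R z + t) \<longrightarrow> w = a *\<^sub>R z + t"
      using h unfolding mubs_def unfolding mem_Collect_eq by (rule conjunct2)
    ultimately have "a *\<^sub>R w + t = a *\<^sub>R z + t" by blast
    then show "w = z" using a by simp
  qed
next
  assume h: "z \<in> mubs C {x, y}"
  then have zu: "a *\<^sub>R z + t \<in> ubs C {a *\<^sub>R x + t, a *\<^sub>R y + t}" using ubs_aff[OF assms] by (simp add: mubs_def)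
  show "a *\<^sub>R z + t \<in> mubs C {a *\<^sub>R x + t, a *\<^sub>R y + t}" unfolding mubs_def
  proof (intro CollectI conjI allI impI zu)
    fix w assume w: "(\<forall>b\<in>{a *\<^sub>R x + t, a *\<^sub>R y + t}. cle C b w) \<and> cle C w (a *\<^sub>R z + t)"
    define w' where "w' = (1/a) *\<^sub>R (w - t)"
    have ww: "w = a *\<^sub>R w' + t" unfolding w'_def using inv_aff[OF a] .
    have "(\<forall>b\<in>{x, y}. cle C b w') \<and> cle C w' z"
      using w affine_cle[OF assms] unfolding ww by simp
    moreover have "\<forall>w. (\<forall>b\<in>{x, y}. cle C b w) \<and> cle C w z \<longrightarrow> w = z"
      using h unfolding mubs_def unfolding mem_Collect_eq by (rule conjunct2)
    ultimately have "w' = z" by blast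
    then show "w = a *\<^sub>R z + t" using ww by simp
  qed
qed

lemma bset_aff: assumes "pcone C" "(a::real) > 0"
  shows "a *\<^sub>R z + t \<in> bset C mu {a *\<^sub>R x + t, a *\<^sub>R y + t} \<longleftrightarrow> z \<in> bset C mu {x, y}"
  using ubs_aff[OF assms] mubs_aff[OF assms] by (simp add: bset_def)

lemma sigma_aff: assumes "(a::real) > 0"
  shows "sigma (a *\<^sub>R x + t) (a *\<^sub>R y + t) (a *\<^sub>R z + t) = a * sigma x y z"
proof -
  have "(a *\<^sub>R z + t) - (a *\<^sub>R x + t) = a *\<^sub>R (z - x)" "(a *\<^sub>R z + t) - (a *\<^sub>R y + t) = a *\<^sub>R (z - y)"
    by (simp_all add: algebra_simps)
  then show ?thesis using assms by (simp add: sigma_def distrib_left)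
qed

lemma qsup_aff: assumes Q: "quasi_lattice C mu" and a: "(a::real) > 0"
  shows "qsup C mu (a *\<^sub>R x + t) (a *\<^sub>R y + t) = a *\<^sub>R qsup C mu x y + t"
proof (rule ql_uniq[OF Q])
  have P: "pcone C" using Q ql_pcone by blast
  let ?z = "qsup C mu x y"
  have h: "is_qsup C mu x y ?z" using ql_qsup[OF Q] .
  show "is_qsup C mu (a *\<^sub>R x + t) (a *\<^sub>R y + t) (a *\<^sub>R ?z + t)"
    unfolding is_qsup_def
  proof (intro conjI ballI)
    show "a *\<^sub>R ?z + t \<in> bset C mu {a *\<^sub>R x + t, a *\<^sub>R y + t}"
      using h bset_aff[OF P a] by (simp add: is_qsup_def)
  next
    fix w assume w: "w \<in> bset C mu {a *\<^sub>R x + t, a *\<^sub>R y + t}"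
    define w' where "w' = (1/a) *\<^sub>R (w - t)"
    have ww: "w = a *\<^sub>R w' + t" unfolding w'_def using inv_aff[OF a] .
    have "w' \<in> bset C mu {x, y}" using w bset_aff[OF P a] unfolding ww by simp
    then have "sigma x y ?z \<le> sigma x y w'" using h by (simp add: is_qsup_def)
    then show "sigma (a *\<^sub>R x + t) (a *\<^sub>R y + t) (a *\<^sub>R ?z + t) \<le> sigma (a *\<^sub>R x + t) (a *\<^sub>R y + t) w"
      unfolding ww sigma_aff[OF a] using a by simp
  qed
qed

lemma qsup_trans: "quasi_lattice C mu \<Longrightarrow> qsup C mu (x + t) (y + t) = qsup C mu x y + t"
  using qsup_aff[of C mu 1 x t y] by simp

lemma qsup_scale: "quasi_lattice C mu \<Longrightarrow> (a::real) > 0 \<Longrightarrow> qsup C mu (a *\<^sub>R x) (a *\<^sub>R y) = a *\<^sub>R qsup C mu x y"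
  using qsup_aff[of C mu a x 0 y] by simp

lemma qsup_sym: assumes Q: "quasi_lattice C mu" shows "qsup C mu x y = qsup C mu y x"
proof -
  have "is_qsup C mu y x (qsup C mu x y)" using ql_qsup[OF Q, of x y]
    by (simp add: is_qsup_def sigma_def insert_commute add.commute)
  then show ?thesis using ql_uniq[OF Q] by metis
qed

lemma le_qsup: assumes Q: "quasi_lattice C mu" and le: "cle C x y" shows "qsup C mu x y = y"
proof (rule ql_uniq[OF Q])
  have P: "pcone C" using Q ql_pcone by blast
  have yy: "cle C y y" using cone0[OF Q] by (simp add: cle_def)
  have yu: "y \<in> ubs C {x, y}" using le yy by (simp add: ubs_def)
  have yb: "y \<in> bset C mu {x, y}"
  proof (cases mu)
    case True
    have "y \<in> mubs C {x, y}" unfolding mubs_def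
    proof (intro CollectI conjI allI impI yu)
      fix w assume "(\<forall>b\<in>{x, y}. cle C b w) \<and> cle C w y"
      then have "w - y \<in> C" "- (w - y) \<in> C" by (auto simp: cle_def)
      then have "w - y = 0" using pointed[of C "w - y"] Q True by simp
      then show "w = y" by simp
    qed
    then show ?thesis using True by (simp add: bset_def)
  qed (simp add: bset_def yu)
  show "is_qsup C mu x y y" unfolding is_qsup_def
  proof (intro conjI ballI yb)
    fix w
    have "norm (y - x) \<le> norm (w - x) + norm (w - y)"
      using norm_triangle_ineq4[of "w - x" "w - y"] by simp
    then show "sigma x y y \<le> sigma x y w" by (simp add: sigma_def)
  qed
qed

theorem theorem5p8:
  fixes C :: "'a::banach set" and mu :: bool and x y z :: 'a
  assumes "quasi_lattice C mu"
  shows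
   "(qsup C mu x x = x \<and> qinf C mu x x = x)
  \<and> (\<forall>a::real. a \<ge> 0 \<longrightarrow>
        qsup C mu (a *\<^sub>R x) (a *\<^sub>R y) = a *\<^sub>R qsup C mu x y \<and>
        qinf C mu (a *\<^sub>R x) (a *\<^sub>R y) = a *\<^sub>R qinf C mu x y)
  \<and> (\<forall>a::real. a \<le> 0 \<longrightarrow>
        qsup C mu (a *\<^sub>R x) (a *\<^sub>R y) = a *\<^sub>R qinf C mu x y \<and>
        qinf C mu (a *\<^sub>R x) (a *\<^sub>R y) = a *\<^sub>R qsup C mu x y)
  \<and> (qsup C mu x y + z = qsup C mu (x + z) (y + z) \<and>
     qinf C mu x y + z = qinf C mu (x + z) (y + z))
  \<and> (cle C 0 (qpos C mu x) \<and> cle C 0 (qneg C mu x) \<and> qneg C mu x = qpos C mu (- x))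
  \<and> (cle C 0 (qabs C mu x) \<and>
     (\<forall>a::real. qabs C mu (a *\<^sub>R x) = \<bar>a\<bar> *\<^sub>R qabs C mu x) \<and>
     qabs C mu (- x) = qabs C mu x)
  \<and> (x = qpos C mu x - qneg C mu x \<and> qinf C mu (qpos C mu x) (qneg C mu x) = 0 \<and>
     qabs C mu x = qpos C mu x + qneg C mu x)
  \<and> (cle C 0 x \<longrightarrow> qinf C mu x 0 = 0 \<and> x = qpos C mu x \<and> x = qabs C mu x)
  \<and> (qabs C mu (qabs C mu x) = qabs C mu x)
  \<and> (qsup C mu x y + qinf C mu x y = x + y \<and> qsup C mu x y - qinf C mu x y = qabs C mu (x - y))
  \<and> (qsup C mu x y = (1/2) *\<^sub>R (x + y) + (1/2) *\<^sub>R qabs C mu (x - y) \<and>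
     qinf C mu x y = (1/2) *\<^sub>R (x + y) - (1/2) *\<^sub>R qabs C mu (x - y))"
proof -
  note Q = assms
  have P: "pcone C" using Q ql_pcone by blast
  have C0: "0 \<in> C" using cone0[OF Q] .
  define S where "S = qsup C mu"
  have sym: "\<And>u v. S u v = S v u" unfolding S_def using qsup_sym[OF Q] by blast
  have tr: "\<And>u v t. S (u + t) (v + t) = S u v + t" unfolding S_def using qsup_trans[OF Q] by blast
  have sc: "\<And>u v a. (a::real) > 0 \<Longrightarrow> S (a *\<^sub>R u) (a *\<^sub>R v) = a *\<^sub>R S u v"
    unfolding S_def using qsup_scale[OF Q] by blast
  have rf: "\<And>u. S u u = u" unfolding S_def using le_qsup[OF Q] C0 by (simp add: cle_def)
  have sc0: "\<And>u v a. (a::real) \<ge> 0 \<Longrightarrow> S (a *\<^sub>R u) (a *\<^sub>R v) = a *\<^sub>R S u v"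
  proof -
    fix u v and a :: real assume "a \<ge> 0"
    then show "S (a *\<^sub>R u) (a *\<^sub>R v) = a *\<^sub>R S u v"
      using sc[of a u v] rf[of 0] by (cases "a = 0") auto
  qed
  have ub: "\<And>u v. cle C u (S u v) \<and> cle C v (S u v)"
  proof -
    fix u v
    have "S u v \<in> bset C mu {u, v}" unfolding S_def using ql_qsup[OF Q, of u v] by (simp add: is_qsup_def)
    then have "S u v \<in> ubs C {u, v}" using mubs_sub by (auto simp: bset_def split: if_splits)
    then show "cle C u (S u v) \<and> cle C v (S u v)" by (simp add: ubs_def)
  qed
  have leS: "\<And>u v. cle C u v \<Longrightarrow> S u v = v" unfolding S_def using le_qsup[OF Q] by blast
  have inf: "\<And>u v. qinf C mu u v = u + v - S u v"
  proof -
    fix u v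
    have "S (- u + (u + v)) (- v + (u + v)) = S (- u) (- v) + (u + v)" by (rule tr)
    then have "S (- u) (- v) = S u v - u - v" using sym[of v u] by (simp add: algebra_simps)
    then show "qinf C mu u v = u + v - S u v" unfolding qinf_def S_def by simp
  qed
  have posd: "\<And>u. qpos C mu u = S 0 u" unfolding qpos_def S_def by simp
  have negd: "\<And>u. qneg C mu u = S 0 (- u)" unfolding qneg_def S_def by simp
  have absd: "\<And>u. qabs C mu u = S (- u) u" unfolding qabs_def S_def by simp
  have neg_pos: "\<And>u. qneg C mu u = qpos C mu u - u"
  proof -
    fix u
    have "S (0 + u) (- u + u) = S 0 (- u) + u" by (rule tr)
    then show "qneg C mu u = qpos C mu u - u" using sym[of u 0] by (simp add: posd negd algebra_simps)
  qed
  have abs_pos: "\<And>u. qabs C mu u = qpos C mu u + qneg C mu u"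
  proof -
    fix u
    have "S (0 + (- u)) (2 *\<^sub>R u + (- u)) = S 0 (2 *\<^sub>R u) + (- u)" by (rule tr)
    moreover have "S 0 (2 *\<^sub>R u) = 2 *\<^sub>R S 0 u" using sc[of 2 0 u] by simp
    moreover have "2 *\<^sub>R u + (- u) = u" by (simp add: scaleR_2)
    ultimately have "S (- u) u = 2 *\<^sub>R S 0 u - u" by simp
    then show "qabs C mu u = qpos C mu u + qneg C mu u" by (simp add: absd posd neg_pos scaleR_2)
  qed
  have pos_ge: "qpos C mu u \<in> C" for u using ub[of 0 u] by (simp add: posd cle_def)
  have neg_ge: "qneg C mu u \<in> C" for u using ub[of 0 "- u"] by (simp add: negd cle_def)
  have abs_ge: "\<And>u. qabs C mu u \<in> C" using abs_pos pos_ge neg_ge cone_add[OF P] by simp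
  have nonneg: "\<And>u. cle C 0 u \<Longrightarrow> qinf C mu u 0 = 0 \<and> u = qpos C mu u \<and> u = qabs C mu u"
  proof -
    fix u assume u: "cle C 0 u"
    have s1: "S 0 u = u" using leS u .
    have s2: "S u 0 = u" using s1 sym by metis
    have "cle C (- u) 0" using u by (simp add: cle_def)
    then have "S (- u) 0 = 0" using leS by blast
    then have s3: "qneg C mu u = 0" using sym by (metis negd)
    show "qinf C mu u 0 = 0 \<and> u = qpos C mu u \<and> u = qabs C mu u"
      using s1 s2 s3 by (simp add: inf posd abs_pos)
  qed
  have absabs: "\<And>u. qabs C mu (qabs C mu u) = qabs C mu u"
    using nonneg abs_ge by (simp add: cle_def)
  have abs_scale: "\<And>a. qabs C mu (a *\<^sub>R x) = \<bar>a\<bar> *\<^sub>R qabs C mu x"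
  proof -
    fix a :: real
    show "qabs C mu (a *\<^sub>R x) = \<bar>a\<bar> *\<^sub>R qabs C mu x"
    proof (cases "a \<ge> 0")
      case True
      then show ?thesis using sc0[of a "- x" x] by (simp add: absd)
    next
      case False
      then have "S ((- a) *\<^sub>R x) ((- a) *\<^sub>R (- x)) = (- a) *\<^sub>R S x (- x)" using sc0[of "- a" x "- x"] by simp
      then show ?thesis using False sym[of x "- x"] by (simp add: absd)
    qed
  qed
  have absneg: "qabs C mu (- x) = qabs C mu x" using sym[of x "- x"] by (simp add: absd)
  have supinf: "S x y + qinf C mu x y = x + y" by (simp add: inf)
  have supminf: "S x y - qinf C mu x y = qabs C mu (x - y)"
  proof -
    have "S (y + (- y)) (x + (- y)) = S y x + (- y)" by (rule tr)
    then have "qpos C mu (x - y) = S x y - y" using sym[of y x] by (simp add: posd)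
    then show ?thesis by (simp add: abs_pos neg_pos inf algebra_simps)
  qed
  have half: "S x y = (1/2) *\<^sub>R (x + y) + (1/2) *\<^sub>R qabs C mu (x - y)"
  proof -
    have "qabs C mu (x - y) = 2 *\<^sub>R S x y - (x + y)" using supminf by (simp add: inf scaleR_2 algebra_simps)
    then have "(x + y) + qabs C mu (x - y) = 2 *\<^sub>R S x y" by simp
    then have "(1/2) *\<^sub>R ((x + y) + qabs C mu (x - y)) = (1/2) *\<^sub>R (2 *\<^sub>R S x y)" by simp
    then show ?thesis by (simp add: scaleR_add_right)
  qed
  have half2: "qinf C mu x y = (1/2) *\<^sub>R (x + y) - (1/2) *\<^sub>R qabs C mu (x - y)"
  proof -
    have "qinf C mu x y = x + y - S x y" by (rule inf)
    also have "\<dots> = (1/2) *\<^sub>R (x + y) + (1/2) *\<^sub>R (x + y) - S x y" by (simp add: scaleR_2[symmetric] algebra_simps)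
    finally show ?thesis using half by (simp add: algebra_simps)
  qed
  have p2: "\<forall>a::real. a \<ge> 0 \<longrightarrow>
        qsup C mu (a *\<^sub>R x) (a *\<^sub>R y) = a *\<^sub>R qsup C mu x y \<and>
        qinf C mu (a *\<^sub>R x) (a *\<^sub>R y) = a *\<^sub>R qinf C mu x y"
  proof (intro allI impI conjI)
    fix a :: real assume a: "a \<ge> 0"
    show "qsup C mu (a *\<^sub>R x) (a *\<^sub>R y) = a *\<^sub>R qsup C mu x y" using sc0[OF a] by (simp add: S_def)
    show "qinf C mu (a *\<^sub>R x) (a *\<^sub>R y) = a *\<^sub>R qinf C mu x y"
      using sc0[OF a, of x y] by (simp add: inf S_def algebra_simps)
  qed
  have p3: "\<forall>a::real. a \<le> 0 \<longrightarrow>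
        qsup C mu (a *\<^sub>R x) (a *\<^sub>R y) = a *\<^sub>R qinf C mu x y \<and>
        qinf C mu (a *\<^sub>R x) (a *\<^sub>R y) = a *\<^sub>R qsup C mu x y"
  proof (intro allI impI conjI)
    fix a :: real assume a: "a \<le> 0"
    then have a': "- a \<ge> 0" by simp
    have e: "S (a *\<^sub>R x) (a *\<^sub>R y) = (- a) *\<^sub>R S (- x) (- y)" using sc0[OF a', of "- x" "- y"] by simp
    show "qsup C mu (a *\<^sub>R x) (a *\<^sub>R y) = a *\<^sub>R qinf C mu x y"
      using e by (simp add: qinf_def S_def)
    show "qinf C mu (a *\<^sub>R x) (a *\<^sub>R y) = a *\<^sub>R qsup C mu x y"
      using sc0[OF a', of x y] by (simp add: qinf_def S_def)
  qed
  have p4: "qsup C mu x y + z = qsup C mu (x + z) (y + z) \<and>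
     qinf C mu x y + z = qinf C mu (x + z) (y + z)"
    using tr[of x z y] by (simp add: inf S_def algebra_simps)
  have b1: "qsup C mu x x = x \<and> qinf C mu x x = x" using rf[of x] inf[of x x] by (simp add: S_def)
  have b5: "cle C 0 (qpos C mu x) \<and> cle C 0 (qneg C mu x) \<and> qneg C mu x = qpos C mu (- x)"
    using pos_ge[of x] neg_ge[of x] by (simp add: cle_def negd posd)
  have b6: "cle C 0 (qabs C mu x) \<and>
     (\<forall>a::real. qabs C mu (a *\<^sub>R x) = \<bar>a\<bar> *\<^sub>R qabs C mu x) \<and>
     qabs C mu (- x) = qabs C mu x"
    using abs_ge[of x] abs_scale absneg by (simp add: cle_def)
  have b7: "x = qpos C mu x - qneg C mu x \<and> qinf C mu (qpos C mu x) (qneg C mu x) = 0 \<and>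
     qabs C mu x = qpos C mu x + qneg C mu x"
  proof (intro conjI)
    show "x = qpos C mu x - qneg C mu x" using neg_pos[of x] by simp
    have e1: "S (x + qneg C mu x) (0 + qneg C mu x) = S x 0 + qneg C mu x" by (rule tr)
    have e2: "x + qneg C mu x = qpos C mu x" using neg_pos[of x] by simp
    have e3: "S x 0 = qpos C mu x" using sym[of x 0] by (simp add: posd)
    have "S (qpos C mu x) (qneg C mu x) = qpos C mu x + qneg C mu x"
      using e1 unfolding e2 e3 by simp
    then show "qinf C mu (qpos C mu x) (qneg C mu x) = 0" by (simp add: inf)
    show "qabs C mu x = qpos C mu x + qneg C mu x" by (rule abs_pos)
  qed
  have b10: "qsup C mu x y + qinf C mu x y = x + y \<and> qsup C mu x y - qinf C mu x y = qabs C mu (x - y)"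
    using supinf supminf by (simp add: S_def)
  have b11: "qsup C mu x y = (1/2) *\<^sub>R (x + y) + (1/2) *\<^sub>R qabs C mu (x - y) \<and>
     qinf C mu x y = (1/2) *\<^sub>R (x + y) - (1/2) *\<^sub>R qabs C mu (x - y)"
    using half half2 by (simp add: S_def)
  show ?thesis using b1 p2 p3 p4 b5 b6 b7 nonneg[of x] absabs[of x] b10 b11 by blast
qed

end
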